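(* Let $H$ be a Hilbert space, $K$ a separable infinite-dimensional Hilbert space, $\mathcal{M}\subseteq \mathcal{P}_H$ a subspace lattice and $\mathcal{L}\subseteq \mathcal{P}_K$ a subspace lattice. For every family $(f_\alpha)_{\alpha\in\mathbb{A}}\subseteq m(\mathcal{M},\mathcal{L})$ we have $\theta\left(\bigvee_{\alpha\in\mathbb{A}} f_\alpha\right)=\bigvee_{\alpha\in\mathbb{A}}\theta(f_\alpha)$.
   Context: For a Hilbert space $X$, $\mathcal{P}_X$ denotes the set of orthogonal projections on $X$, a complete lattice under $\wedge$ (projection onto the intersection of ranges) and $\vee$ (projection onto the closed linear span of ranges). A subspace lattice on $X$ is a sublattice of $\mathcal{P}_X$ containing $0$ and $I$ and closed in the strong operator topology. For a set $\mathcal{E}\subseteq\mathcal{P}_H$ and a subspace lattice $\mathcal{L}\subseteq\mathcal{P}_K$, $m(\mathcal{E},\mathcal{L})$ is the set of all maps $\mathcal{E}\to\mathcal{L}$, a complete lattice under pointwise operations $(f\vee g)(E)=f(E)\vee g(E)$, $(f\wedge g)(E)=f(E)\wedge g(E)$ (and pointwise arbitrary joins/meets). The map $\theta: m(\mathcal{E},\mathcal{L})\to\mathcal{P}_{K\otimes H}$ is $\theta(f)=\bigvee\{f(E)\otimes E: E\in\mathcal{E}\}$; here $\mathcal{E}=\mathcal{M}$. *)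

theory Defs
  imports "HOL-Analysis.Analysis"
begin

text \<open>A complex Hilbert space H is modelled as a real Hilbert space (type class
  real_inner + complete_space, real inner product = real part of the complex one)
  together with a complex structure J (multiplication by the imaginary unit):
  J is real-linear, J (J x) = - x and J is orthogonal.\<close>

definition cplx_structure :: "('h::real_inner \<Rightarrow> 'h) \<Rightarrow> bool" where
  "cplx_structure J \<longleftrightarrow> linear J \<and> (\<forall>x. J (J x) = - x) \<and> (\<forall>x y. inner (J x) (J y) = inner x y)"

text \<open>Orthogonal projections on H are identified with their ranges, the closed
  complex-linear subspaces of H.\<close>

definition hsub :: "('h::real_inner \<Rightarrow> 'h) \<Rightarrow> 'h set \<Rightarrow> bool" where
  "hsub J S \<longleftrightarrow> subspace S \<and> closed S \<and> J ` S \<subseteq> S"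

definition hjoin :: "('h::real_inner \<Rightarrow> 'h) \<Rightarrow> 'h set set \<Rightarrow> 'h set" where
  "hjoin J SS = \<Inter>{S. hsub J S \<and> \<Union>SS \<subseteq> S}"

definition hproj :: "'h::real_inner set \<Rightarrow> 'h \<Rightarrow> 'h" where
  "hproj S x = (THE y. y \<in> S \<and> (\<forall>z\<in>S. inner (x - y) z = 0))"

definition hsot_closed :: "('h::real_inner \<Rightarrow> 'h) \<Rightarrow> 'h set set \<Rightarrow> bool" where
  "hsot_closed J LL \<longleftrightarrow> (\<forall>S. hsub J S \<longrightarrow>
     (\<forall>F. finite F \<longrightarrow> (\<forall>e>0. \<exists>T\<in>LL. \<forall>x\<in>F. norm (hproj T x - hproj S x) < e)) \<longrightarrow> S \<in> LL)"

definition hsub_lattice :: "('h::real_inner \<Rightarrow> 'h) \<Rightarrow> 'h set set \<Rightarrow> bool" where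
  "hsub_lattice J LL \<longleftrightarrow> (\<forall>S\<in>LL. hsub J S) \<and> {0} \<in> LL \<and> UNIV \<in> LL \<and>
     (\<forall>S\<in>LL. \<forall>T\<in>LL. S \<inter> T \<in> LL \<and> hjoin J {S, T} \<in> LL) \<and> hsot_closed J LL"

text \<open>With V = complex and Jv = (*) i
  this is the separable infinite-dimensional complex Hilbert space K = l2;
  with V = H it is the Hilbert tensor product l2 \<otimes> H.\<close>

definition l2set :: "(nat \<Rightarrow> 'v::real_inner) set" where
  "l2set = {x. summable (\<lambda>n. (norm (x n))\<^sup>2)}"

definition l2dist :: "(nat \<Rightarrow> 'v::real_inner) \<Rightarrow> (nat \<Rightarrow> 'v) \<Rightarrow> real" where
  "l2dist x y = sqrt (\<Sum>n. (norm (x n - y n))\<^sup>2)"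

definition l2inner :: "(nat \<Rightarrow> 'v::real_inner) \<Rightarrow> (nat \<Rightarrow> 'v) \<Rightarrow> real" where
  "l2inner x y = (\<Sum>n. inner (x n) (y n))"

definition l2csub :: "('v::real_inner \<Rightarrow> 'v) \<Rightarrow> (nat \<Rightarrow> 'v) set \<Rightarrow> bool" where
  "l2csub Jv S \<longleftrightarrow> S \<subseteq> l2set \<and> (\<lambda>n. 0) \<in> S \<and>
     (\<forall>x\<in>S. \<forall>y\<in>S. (\<lambda>n. x n + y n) \<in> S) \<and>
     (\<forall>c. \<forall>x\<in>S. (\<lambda>n. c *\<^sub>R x n) \<in> S) \<and>
     (\<forall>x\<in>S. (\<lambda>n. Jv (x n)) \<in> S) \<and>
     (\<forall>x\<in>l2set. (\<forall>e>0. \<exists>y\<in>S. l2dist x y < e) \<longrightarrow> x \<in> S)"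

definition l2join :: "('v::real_inner \<Rightarrow> 'v) \<Rightarrow> (nat \<Rightarrow> 'v) set set \<Rightarrow> (nat \<Rightarrow> 'v) set" where
  "l2join Jv SS = \<Inter>{S. l2csub Jv S \<and> \<Union>SS \<subseteq> S}"

definition l2proj :: "(nat \<Rightarrow> 'v::real_inner) set \<Rightarrow> (nat \<Rightarrow> 'v) \<Rightarrow> (nat \<Rightarrow> 'v)" where
  "l2proj S x = (THE y. y \<in> S \<and> (\<forall>z\<in>S. l2inner (\<lambda>n. x n - y n) z = 0))"

definition l2sot_closed :: "('v::real_inner \<Rightarrow> 'v) \<Rightarrow> (nat \<Rightarrow> 'v) set set \<Rightarrow> bool" where
  "l2sot_closed Jv LL \<longleftrightarrow> (\<forall>S. l2csub Jv S \<longrightarrow>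
     (\<forall>F. finite F \<longrightarrow> F \<subseteq> l2set \<longrightarrow>
        (\<forall>e>0. \<exists>T\<in>LL. \<forall>x\<in>F. l2dist (l2proj T x) (l2proj S x) < e)) \<longrightarrow> S \<in> LL)"

definition l2sub_lattice :: "('v::real_inner \<Rightarrow> 'v) \<Rightarrow> (nat \<Rightarrow> 'v) set set \<Rightarrow> bool" where
  "l2sub_lattice Jv LL \<longleftrightarrow> (\<forall>S\<in>LL. l2csub Jv S) \<and> {\<lambda>n. 0} \<in> LL \<and> l2set \<in> LL \<and>
     (\<forall>S\<in>LL. \<forall>T\<in>LL. S \<inter> T \<in> LL \<and> l2join Jv {S, T} \<in> LL) \<and> l2sot_closed Jv LL"

definition JK :: "complex \<Rightarrow> complex" where
  "JK z = \<i> * z"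

text \<open>Elementary tensor a \<otimes> e in l2 \<otimes> H = l2(N; H): (a \<otimes> e)_n = a_n e
  (complex scalar acting through J).\<close>
definition tens_el :: "('h::real_inner \<Rightarrow> 'h) \<Rightarrow> (nat \<Rightarrow> complex) \<Rightarrow> 'h \<Rightarrow> (nat \<Rightarrow> 'h)" where
  "tens_el J a e = (\<lambda>n. Re (a n) *\<^sub>R e + Im (a n) *\<^sub>R J e)"

definition tens :: "('h::real_inner \<Rightarrow> 'h) \<Rightarrow> (nat \<Rightarrow> complex) set \<Rightarrow> 'h set \<Rightarrow> (nat \<Rightarrow> 'h) set" where
  "tens J F E = l2join J {{tens_el J a e | a e. a \<in> F \<and> e \<in> E}}"

definition theta :: "('h::real_inner \<Rightarrow> 'h) \<Rightarrow> 'h set set \<Rightarrow> ('h set \<Rightarrow> (nat \<Rightarrow> complex) set) \<Rightarrow> (nat \<Rightarrow> 'h) set" where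
  "theta J MM f = l2join J {tens J (f E) E | E. E \<in> MM}"

definition mjoin :: "'a set \<Rightarrow> ('a \<Rightarrow> 'h set \<Rightarrow> (nat \<Rightarrow> complex) set) \<Rightarrow> 'h set \<Rightarrow> (nat \<Rightarrow> complex) set" where
  "mjoin A f = (\<lambda>E. l2join JK ((\<lambda>\<alpha>. f \<alpha> E) ` A))"

end

theory Submission
  imports Defs
begin

lemma cs_facts:
  assumes "cplx_structure J"
  shows "J (x+y) = J x + J y" "J (c *\<^sub>R x) = c *\<^sub>R J x" "J (J x) = -x"
    "inner x (J x) = 0" "norm (J x) = norm x"
proof -
  have l: "linear J" and jj: "\<And>x. J (J x) = -x" and o: "\<And>x y. inner (J x) (J y) = inner x y"
    using assms unfolding cplx_structure_def by auto
  show "J (x+y) = J x + J y" using l by (simp add: linear_add)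
  show "J (c *\<^sub>R x) = c *\<^sub>R J x" using l by (simp add: linear_scale)
  show "J (J x) = -x" by (rule jj)
  have "inner (J x) (J (J x)) = inner x (J x)" by (rule o)
  hence "- inner (J x) x = inner x (J x)" by (simp add: jj)
  thus "inner x (J x) = 0" by (simp add: inner_commute)
  show "norm (J x) = norm x" using o[of x x] by (simp add: norm_eq_sqrt_inner)
qed

lemma tens_el_norm:
  assumes "cplx_structure J"
  shows "norm (tens_el J a e n) = cmod (a n) * norm e"
proof -
  let ?x = "Re (a n)" and ?y = "Im (a n)"
  have "(norm (tens_el J a e n))\<^sup>2 = inner (?x *\<^sub>R e + ?y *\<^sub>R J e) (?x *\<^sub>R e + ?y *\<^sub>R J e)"
    by (simp add: tens_el_def power2_norm_eq_inner)
  also have "\<dots> = ?x^2 * inner e e + ?y^2 * inner (J e) (J e) + 2 * ?x * ?y * inner e (J e)"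
    by (simp add: inner_add_left inner_add_right inner_commute power2_eq_square algebra_simps)
  also have "\<dots> = (?x^2 + ?y^2) * (norm e)^2"
    using cs_facts[OF assms] by (simp add: power2_norm_eq_inner[symmetric] algebra_simps)
  also have "\<dots> = (cmod (a n) * norm e)^2"
    by (simp add: power_mult_distrib cmod_power2)
  finally show ?thesis by (simp add: power2_eq_imp_eq)
qed


lemma l2set_add:
  fixes a b :: "nat \<Rightarrow> 'v::real_inner"
  assumes "a \<in> l2set" "b \<in> l2set"
  shows "(\<lambda>n. a n + b n) \<in> l2set" "(\<lambda>n. a n - b n) \<in> l2set"
proof -
  have s: "summable (\<lambda>n. 2 * (norm (a n))\<^sup>2 + 2 * (norm (b n))\<^sup>2)"
    using assms unfolding l2set_def by (intro summable_add summable_mult) auto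
  have ineq: "\<And>x y::'v. (norm (x + y))\<^sup>2 \<le> 2 * (norm x)\<^sup>2 + 2 * (norm y)\<^sup>2"
  proof -
    fix x y :: 'v
    have "norm (x+y) \<le> norm x + norm y" by (rule norm_triangle_ineq)
    hence "(norm (x+y))\<^sup>2 \<le> (norm x + norm y)\<^sup>2" by (simp add: power_mono)
    also have "\<dots> \<le> 2 * (norm x)\<^sup>2 + 2 * (norm y)\<^sup>2"
      using sum_squares_ge_zero[of "norm x - norm y" 0] by (simp add: power2_eq_square algebra_simps)
    finally show "(norm (x + y))\<^sup>2 \<le> 2 * (norm x)\<^sup>2 + 2 * (norm y)\<^sup>2" .
  qed
  have p: "norm ((norm (a n + b n))\<^sup>2) \<le> 2 * (norm (a n))\<^sup>2 + 2 * (norm (b n))\<^sup>2" for n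
    using ineq[of "a n" "b n"] by simp
  have m: "norm ((norm (a n - b n))\<^sup>2) \<le> 2 * (norm (a n))\<^sup>2 + 2 * (norm (b n))\<^sup>2" for n
    using ineq[of "a n" "- b n"] by simp
  show "(\<lambda>n. a n + b n) \<in> l2set" unfolding l2set_def mem_Collect_eq
    by (rule summable_comparison_test[OF _ s]) (blast intro: p)
  show "(\<lambda>n. a n - b n) \<in> l2set" unfolding l2set_def mem_Collect_eq
    by (rule summable_comparison_test[OF _ s]) (blast intro: m)
qed

lemma l2set_scale:
  fixes a :: "nat \<Rightarrow> 'v::real_inner"
  assumes "a \<in> l2set" "\<And>n. norm (g n) = c * norm (a n)"
  shows "g \<in> l2set"
proof -
  have "summable (\<lambda>n. c^2 * (norm (a n))\<^sup>2)" using assms(1) unfolding l2set_def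
    by (intro summable_mult) auto
  thus ?thesis unfolding l2set_def using assms(2) by (simp add: power_mult_distrib)
qed

lemma l2join_upper: "X \<in> SS \<Longrightarrow> X \<subseteq> l2join Jv SS"
  unfolding l2join_def by auto

lemma l2join_least: "l2csub Jv S \<Longrightarrow> \<Union>SS \<subseteq> S \<Longrightarrow> l2join Jv SS \<subseteq> S"
  unfolding l2join_def by auto

lemma l2join_mono: "\<Union>SS \<subseteq> \<Union>TT \<Longrightarrow> l2join Jv SS \<subseteq> l2join Jv TT"
  unfolding l2join_def by auto

lemma tens_mono: "F \<subseteq> G \<Longrightarrow> tens J F E \<subseteq> tens J G E"
  unfolding tens_def by (rule l2join_mono) blast

lemma S_csub:
  assumes cs: "cplx_structure J" and S': "l2csub J S'"
  shows "l2csub JK {a \<in> l2set. \<forall>e\<in>E. tens_el J a e \<in> S'}" (is "l2csub JK ?S")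
proof -
  have S'0: "(\<lambda>n. 0) \<in> S'" and S'add: "\<And>x y. x \<in> S' \<Longrightarrow> y \<in> S' \<Longrightarrow> (\<lambda>n. x n + y n) \<in> S'"
    and S'sc: "\<And>c x. x \<in> S' \<Longrightarrow> (\<lambda>n. c *\<^sub>R x n) \<in> S'"
    and S'J: "\<And>x. x \<in> S' \<Longrightarrow> (\<lambda>n. J (x n)) \<in> S'"
    and S'cl: "\<And>x. x \<in> l2set \<Longrightarrow> (\<forall>e>0. \<exists>y\<in>S'. l2dist x y < e) \<Longrightarrow> x \<in> S'"
    using S' unfolding l2csub_def by auto
  have tl2: "tens_el J a e \<in> l2set" if "a \<in> l2set" for a e
    by (rule l2set_scale[OF that, of _ "norm e"]) (simp add: tens_el_norm[OF cs] mult.commute)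
  have z: "(\<lambda>n. 0) \<in> ?S"
  proof -
    have "(\<lambda>n. 0::complex) \<in> l2set" by (simp add: l2set_def)
    moreover have "tens_el J (\<lambda>n. 0) e = (\<lambda>n. 0)" for e by (simp add: tens_el_def)
    ultimately show ?thesis using S'0 by simp
  qed
  have ad: "(\<lambda>n. x n + y n) \<in> ?S" if "x \<in> ?S" "y \<in> ?S" for x y
  proof -
    have "tens_el J (\<lambda>n. x n + y n) e = (\<lambda>n. tens_el J x e n + tens_el J y e n)" for e
      by (simp add: tens_el_def algebra_simps)
    thus ?thesis using that l2set_add S'add by auto
  qed
  have sc: "(\<lambda>n. c *\<^sub>R x n) \<in> ?S" if "x \<in> ?S" for c x
  proof -
    have "tens_el J (\<lambda>n. c *\<^sub>R x n) e = (\<lambda>n. c *\<^sub>R tens_el J x e n)" for e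
      by (simp add: tens_el_def algebra_simps)
    moreover have "(\<lambda>n. c *\<^sub>R x n) \<in> l2set"
      by (rule l2set_scale[of x _ "\<bar>c\<bar>"]) (use that in auto)
    ultimately show ?thesis using that S'sc by auto
  qed
  have jk: "(\<lambda>n. JK (x n)) \<in> ?S" if "x \<in> ?S" for x
  proof -
    have "tens_el J (\<lambda>n. JK (x n)) e = (\<lambda>n. J (tens_el J x e n))" for e
      by (simp add: tens_el_def JK_def cs_facts[OF cs] algebra_simps)
    moreover have "(\<lambda>n. JK (x n)) \<in> l2set"
      by (rule l2set_scale[of x _ 1]) (use that in \<open>auto simp: JK_def norm_mult\<close>)
    ultimately show ?thesis using that S'J by auto
  qed
  have cl: "x \<in> ?S" if x: "x \<in> l2set" and ap: "\<forall>e>0. \<exists>y\<in>?S. l2dist x y < e" for x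
  proof -
    have "tens_el J x e \<in> S'" if eE: "e \<in> E" for e
    proof (rule S'cl[OF tl2[OF x]], intro allI impI)
      fix \<epsilon> :: real assume "\<epsilon> > 0"
      moreover have "norm e + 1 > 0" by (simp add: add_nonneg_pos)
      ultimately have "\<epsilon> / (norm e + 1) > 0" by simp
      then obtain y where y: "y \<in> ?S" and d: "l2dist x y < \<epsilon> / (norm e + 1)" using ap by blast
      have sm: "summable (\<lambda>n. (norm (x n - y n))\<^sup>2)"
        using l2set_add(2)[OF x, of y] y by (simp add: l2set_def)
      have eq: "(norm (tens_el J x e n - tens_el J y e n))\<^sup>2 = (norm e)\<^sup>2 * (norm (x n - y n))\<^sup>2" for n
      proof -
        have "tens_el J x e n - tens_el J y e n = tens_el J (\<lambda>n. x n - y n) e n"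
          by (simp add: tens_el_def algebra_simps)
        hence "norm (tens_el J x e n - tens_el J y e n) = cmod (x n - y n) * norm e"
          by (simp only: tens_el_norm[OF cs])
        thus ?thesis by (simp only: power_mult_distrib mult.commute)
      qed
      have s0: "0 \<le> (\<Sum>n. (norm (x n - y n))\<^sup>2)" by (rule suminf_nonneg[OF sm]) simp
      have "l2dist (tens_el J x e) (tens_el J y e) = sqrt ((norm e)\<^sup>2 * (\<Sum>n. (norm (x n - y n))\<^sup>2))"
        unfolding l2dist_def eq suminf_mult[OF sm] by (rule refl)
      also have "\<dots> = norm e * l2dist x y"
        unfolding l2dist_def real_sqrt_mult by simp
      also have "\<dots> \<le> (norm e + 1) * l2dist x y"
        by (rule mult_right_mono) (use s0 in \<open>simp_all add: l2dist_def\<close>)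
      also have "\<dots> < \<epsilon>"
      proof -
        have "norm e + 1 > 0" by (simp add: add_nonneg_pos)
        thus ?thesis using d by (simp add: pos_less_divide_eq mult.commute)
      qed
      finally have dd: "l2dist (tens_el J x e) (tens_el J y e) < \<epsilon>" .
      have "tens_el J y e \<in> S'" using y eE by simp
      with dd show "\<exists>z\<in>S'. l2dist (tens_el J x e) z < \<epsilon>" by blast
    qed
    thus ?thesis using x by simp
  qed
  show ?thesis unfolding l2csub_def
    apply (intro conjI)
    subgoal by blast
    subgoal by (rule z)
    subgoal using ad by blast
    subgoal using sc by blast
    subgoal using jk by blast
    subgoal using cl by blast
    done
qed


theorem proposition3p1:
  fixes J :: "'h::{real_inner, complete_space} \<Rightarrow> 'h"
    and M :: "'h set set"
    and L :: "(nat \<Rightarrow> complex) set set"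
    and A :: "'a set"
    and f :: "'a \<Rightarrow> 'h set \<Rightarrow> (nat \<Rightarrow> complex) set"
  assumes "cplx_structure J"
    and "hsub_lattice J M"
    and "l2sub_lattice JK L"
    and "\<forall>\<alpha>\<in>A. f \<alpha> \<in> M \<rightarrow> L"
  shows "theta J M (mjoin A f) = l2join J ((\<lambda>\<alpha>. theta J M (f \<alpha>)) ` A)"
proof
  have sub: "theta J M (f \<alpha>) \<subseteq> theta J M (mjoin A f)" if "\<alpha> \<in> A" for \<alpha>
    unfolding theta_def
  proof (rule l2join_mono, clarify)
    fix x E assume EM: "E \<in> M" and xt: "x \<in> tens J (f \<alpha> E) E"
    have "f \<alpha> E \<subseteq> mjoin A f E"
      unfolding mjoin_def by (rule l2join_upper) (use that in blast)
    hence "tens J (f \<alpha> E) E \<subseteq> tens J (mjoin A f E) E" by (rule tens_mono)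
    hence "x \<in> tens J (mjoin A f E) E" using xt by (rule subsetD)
    thus "x \<in> \<Union>{tens J (mjoin A f E) E |E. E \<in> M}"
      using EM by blast
  qed
  show "l2join J ((\<lambda>\<alpha>. theta J M (f \<alpha>)) ` A) \<subseteq> theta J M (mjoin A f)"
  proof
    fix x assume x: "x \<in> l2join J ((\<lambda>\<alpha>. theta J M (f \<alpha>)) ` A)"
    show "x \<in> theta J M (mjoin A f)"
      unfolding theta_def l2join_def
    proof (rule InterI, clarify)
      fix S' assume S': "l2csub J S'" "\<Union>{tens J (mjoin A f E) E |E. E \<in> M} \<subseteq> S'"
      have "theta J M (mjoin A f) \<subseteq> S'" unfolding theta_def by (rule l2join_least[OF S'])
      hence "\<Union>((\<lambda>\<alpha>. theta J M (f \<alpha>)) ` A) \<subseteq> S'" using sub by blast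
      thus "x \<in> S'" using x S'(1) unfolding l2join_def by blast
    qed
  qed
  show "theta J M (mjoin A f) \<subseteq> l2join J ((\<lambda>\<alpha>. theta J M (f \<alpha>)) ` A)"
  proof
    fix x assume x: "x \<in> theta J M (mjoin A f)"
    show "x \<in> l2join J ((\<lambda>\<alpha>. theta J M (f \<alpha>)) ` A)"
      unfolding l2join_def
    proof (rule InterI, clarify)
      fix S' assume S': "l2csub J S'" "\<Union>((\<lambda>\<alpha>. theta J M (f \<alpha>)) ` A) \<subseteq> S'"
      have "tens J (mjoin A f E) E \<subseteq> S'" if E: "E \<in> M" for E
      proof -
        let ?S = "{a \<in> l2set. \<forall>e\<in>E. tens_el J a e \<in> S'}"
        have cs: "l2csub JK ?S" by (rule S_csub[OF assms(1) S'(1)])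
        have "f \<alpha> E \<subseteq> ?S" if al: "\<alpha> \<in> A" for \<alpha>
        proof
          fix a assume a: "a \<in> f \<alpha> E"
          have "f \<alpha> \<in> M \<rightarrow> L" using assms(4) al by (rule bspec)
          hence fL: "f \<alpha> E \<in> L" using E by (rule funcset_mem)
          have "\<forall>S\<in>L. l2csub JK S" using assms(3) unfolding l2sub_lattice_def by (rule conjunct1)
          hence "l2csub JK (f \<alpha> E)" using fL by (rule bspec)
          hence "f \<alpha> E \<subseteq> l2set" unfolding l2csub_def by (rule conjunct1)
          hence "a \<in> l2set" using a by (rule subsetD)
          moreover have "tens_el J a e \<in> S'" if "e \<in> E" for e
          proof -
            have "tens_el J a e \<in> tens J (f \<alpha> E) E"
              unfolding tens_def by (rule subsetD[OF l2join_upper]) (use a that in auto)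
            also have "tens J (f \<alpha> E) E \<subseteq> theta J M (f \<alpha>)"
              unfolding theta_def by (rule l2join_upper) (use E in blast)
            also have "\<dots> \<subseteq> S'" using S'(2) al by blast
            finally show ?thesis .
          qed
          ultimately show "a \<in> ?S" by blast
        qed
        hence "mjoin A f E \<subseteq> ?S" unfolding mjoin_def by (intro l2join_least[OF cs]) blast
        hence "{tens_el J a e | a e. a \<in> mjoin A f E \<and> e \<in> E} \<subseteq> S'" by blast
        thus ?thesis unfolding tens_def by (intro l2join_least[OF S'(1)]) blast
      qed
      hence "theta J M (mjoin A f) \<subseteq> S'" unfolding theta_def
        by (intro l2join_least[OF S'(1)]) blast
      thus "x \<in> S'" using x by blast
    qed
  qed
qed

end
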